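(* Let $f$ be a non-constant entire function which has only real zeros, has genus $0$ or $1$, and is real on the real axis. Then the points of ${\rm Fix}({\rm Aut}(f))$ are real, they are separated by the zeros of $f$, and the zeros of $f$ are separated by the points of ${\rm Fix}({\rm Aut}(f))$.
   Context: An automorphic function of $f$ is a (generally multivalued) analytic function $\phi$, or a branch of one, satisfying $f(\phi(z))=f(z)$, i.e. a branch of $f^{-1}\circ f$; ${\rm Aut}(f)$ is the group (under composition) of all of them, with identity ${\rm id}(z)=z$. ${\rm Fix}({\rm Aut}(f))=\bigcup_{\phi\in{\rm Aut}(f)-\{{\rm id}\}}\{w\in\mathbb{C}\,|\,\phi(w)=w\}$, the set of points fixed by some non-identity branch of $f^{-1}\circ f$. *)

theory Defs
  imports "HOL-Complex_Analysis.Complex_Analysis" "HOL-Computational_Algebra.Polynomial"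
begin

text \<open>The nonzero zeros of f, repeated according to multiplicity, are
a n for n in the index set I (finite or infinite).\<close>

definition canonical_factor :: "nat set \<Rightarrow> (nat \<Rightarrow> complex) \<Rightarrow> nat \<Rightarrow> nat \<Rightarrow> complex \<Rightarrow> complex" where
  "canonical_factor I a p n z = (if n \<in> I then weierstrass_factor p (z / a n) else 1)"

definition conv_exponent_sum :: "nat set \<Rightarrow> (nat \<Rightarrow> complex) \<Rightarrow> nat \<Rightarrow> bool" where
  "conv_exponent_sum I a p \<longleftrightarrow>
     summable (\<lambda>n. if n \<in> I then 1 / norm (a n) ^ (p + 1) else 0)"

definition has_genus :: "(complex \<Rightarrow> complex) \<Rightarrow> nat \<Rightarrow> bool" where
  "has_genus f g \<longleftrightarrow>
     (\<exists>(m::nat) (I::nat set) (a::nat \<Rightarrow> complex) (p::nat) (P::complex poly).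
        (\<forall>n\<in>I. a n \<noteq> 0) \<and>
        (\<exists>q. conv_exponent_sum I a q) \<and>
        p = (LEAST q. conv_exponent_sum I a q) \<and>
        (\<forall>z. f z = z ^ m * exp (poly P z) * (\<Prod>n. canonical_factor I a p n z)) \<and>
        g = max p (degree P))"

text \<open>Automorphic functions: a branch of f^{-1} o f, i.e. an analytic function phi on a
domain (open connected set) D with f (phi z) = f z on D.\<close>

definition aut_branch :: "(complex \<Rightarrow> complex) \<Rightarrow> (complex \<Rightarrow> complex) \<Rightarrow> complex set \<Rightarrow> bool" where
  "aut_branch f \<phi> D \<longleftrightarrow> open D \<and> connected D \<and> D \<noteq> {} \<and> \<phi> holomorphic_on D \<and>
     (\<forall>z\<in>D. f (\<phi> z) = f z)"

definition Fix_Aut :: "(complex \<Rightarrow> complex) \<Rightarrow> complex set" where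
  "Fix_Aut f = {w. \<exists>\<phi> D. aut_branch f \<phi> D \<and> \<not> (\<forall>z\<in>D. \<phi> z = z) \<and> w \<in> D \<and> \<phi> w = w}"

end

theory Submission
  imports Defs
begin


lemma fix_crit:
  assumes hol: "f holomorphic_on UNIV" and wF: "w \<in> Fix_Aut f"
  shows "deriv f w = 0"
proof (rule ccontr)
  assume nz: "deriv f w \<noteq> 0"
  obtain \<phi> D where br: "aut_branch f \<phi> D" and nid: "\<not> (\<forall>z\<in>D. \<phi> z = z)"
    and wD: "w \<in> D" and fw: "\<phi> w = w"
    using wF unfolding Fix_Aut_def by blast
  have oD: "open D" and cD: "connected D" and hD: "\<phi> holomorphic_on D"
    and eq: "\<And>z. z \<in> D \<Longrightarrow> f (\<phi> z) = f z"
    using br unfolding aut_branch_def by auto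
  obtain r where r: "r > 0" "inj_on f (ball w r)"
    using has_complex_derivative_locally_injective[OF hol _ _ nz] by auto
  have "continuous (at w) \<phi>"
    using hD oD wD holomorphic_on_imp_continuous_on continuous_on_eq_continuous_at by blast
  then obtain d0 where d0: "d0 > 0" "\<And>z. dist z w < d0 \<Longrightarrow> dist (\<phi> z) (\<phi> w) < r"
    using r(1) unfolding continuous_at_eps_delta by metis
  obtain d1 where d1: "d1 > 0" "ball w d1 \<subseteq> D"
    using oD wD open_contains_ball by blast
  define d where "d = min d0 (min d1 r)"
  have dpos: "d > 0" using d0 d1 r by (simp add: d_def)
  have bd: "ball w d \<subseteq> D" using d1 by (auto simp: d_def)
  have idloc: "\<phi> z - z = 0" if "z \<in> ball w d" for z
  proof -
    have "dist z w < d0" "dist w z < r" using that by (auto simp: d_def dist_commute)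
    hence "\<phi> z \<in> ball w r" "z \<in> ball w r" using d0(2) fw by (auto simp: dist_commute)
    moreover have "f (\<phi> z) = f z" using eq bd that by auto
    ultimately show ?thesis using r(2) by (auto dest: inj_onD)
  qed
  have "\<forall>z\<in>D. \<phi> z - z = 0"
  proof
    fix z assume "z \<in> D"
    show "\<phi> z - z = 0"
      by (rule analytic_continuation[of "\<lambda>z. \<phi> z - z" D "ball w d" w])
         (use hD oD cD bd wD dpos idloc \<open>z \<in> D\<close> in \<open>auto intro!: holomorphic_intros simp: islimpt_ball\<close>)
  qed
  with nid show False by auto
qed




lemma root_unity_ne1:
  assumes "n \<ge> (2::nat)"
  shows "exp (2 * of_real pi * \<i> / of_nat n) \<noteq> 1"
proof
  assume "exp (2 * of_real pi * \<i> / of_nat n) = 1"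
  then obtain j :: int where j: "Im (2 * of_real pi * \<i> / of_nat n) = of_int (2 * j) * pi"
    unfolding exp_eq_1 by blast
  have "Im (2 * of_real pi * \<i> / of_nat n) = 2 * pi / n"
    by (simp add: Im_divide_of_nat)
  with j have "pi * (2 / real n) = pi * (2 * of_int j)" by (simp add: mult_ac)
  hence "2 / real n = 2 * of_int j" by (metis mult_cancel_left pi_neq_zero times_divide_eq_right)
  hence "1 / real n = of_int j" by simp
  moreover have "0 < 1 / real n" "1 / real n < 1" using assms by auto
  ultimately show False by (metis of_int_0_less_iff of_int_less_1_iff not_less zero_less_one_class.zero_le_one int_one_le_iff_zero_less less_le_not_le of_int_1_le_iff)
qed

lemma crit_fix:
  assumes hol: "f holomorphic_on UNIV" and nc: "\<not> (\<exists>c. \<forall>z. f z = c)"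
    and d0: "deriv f w = 0"
  shows "w \<in> Fix_Aut f"
proof -
  define F where "F = (\<lambda>z. f z - f w)"
  have holF: "F holomorphic_on UNIV" unfolding F_def by (intro holomorphic_intros hol)
  have ncF: "\<not> F constant_on UNIV"
  proof
    assume "F constant_on UNIV"
    then obtain c where "\<forall>z. F z = c" unfolding constant_on_def by auto
    hence "\<forall>z. f z = c + f w" unfolding F_def by (metis diff_eq_eq)
    with nc show False by blast
  qed
  have Fw: "F w = 0" by (simp add: F_def)
  obtain n r g where n0: "0 < n" and r0: "0 < r" and "ball w r \<subseteq> UNIV"
    and holg: "g holomorphic_on ball w r"
    and Fg: "\<And>z. z \<in> ball w r \<Longrightarrow> F z = (z - w)^n * g z"
    and gnz: "\<And>z. z \<in> ball w r \<Longrightarrow> g z \<noteq> 0"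
    by (rule holomorphic_factor_zero_nonconstant[OF holF open_UNIV connected_UNIV UNIV_I Fw ncF]) blast
  have n2: "n \<ge> 2"
  proof (rule ccontr)
    assume "\<not> n \<ge> 2"
    with n0 have n1: "n = 1" by auto
    have "(g has_field_derivative deriv g w) (at w)"
      using holg r0 by (auto intro!: holomorphic_derivI)
    hence "((\<lambda>z. (z - w) * g z) has_field_derivative g w) (at w)"
      by (auto intro!: derivative_eq_intros)
    hence "(F has_field_derivative g w) (at w)"
      by (rule has_field_derivative_transform_within_open[of _ _ _ "ball w r"])
         (use r0 Fg n1 in auto)
    moreover have "(F has_field_derivative deriv f w) (at w)"
      unfolding F_def using hol
      by (auto intro!: derivative_eq_intros holomorphic_derivI[of f UNIV])
    ultimately have "g w = 0" using d0 DERIV_unique by metis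
    with gnz r0 show False by auto
  qed
  obtain L where holL: "L holomorphic_on ball w r" and expL: "\<And>z. z \<in> ball w r \<Longrightarrow> exp (L z) = g z"
    using holomorphic_logarithm_exists[OF convex_ball open_ball holg gnz, of w] r0 by auto
  define k where "k = (\<lambda>z. (z - w) * exp (L z / of_nat n))"
  have holk: "k holomorphic_on ball w r" unfolding k_def by (intro holomorphic_intros holL) auto
  have kn: "k z ^ n = F z" if "z \<in> ball w r" for z
  proof -
    have "exp (L z / of_nat n) ^ n = exp (of_nat n * (L z / of_nat n))"
      by (rule exp_of_nat_mult[symmetric])
    also have "\<dots> = exp (L z)" using n0 by simp
    finally show ?thesis using that Fg expL by (simp add: k_def power_mult_distrib)
  qed
  have kw: "k w = 0" by (simp add: k_def)
  have "(L has_field_derivative deriv L w) (at w)"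
    using holL r0 by (auto intro!: holomorphic_derivI)
  hence "(k has_field_derivative exp (L w / of_nat n)) (at w)"
    unfolding k_def using n0 by (auto intro!: derivative_eq_intros)
  hence dk: "deriv k w \<noteq> 0" by (simp add: DERIV_imp_deriv)
  obtain \<rho> where \<rho>: "\<rho> > 0" "ball w \<rho> \<subseteq> ball w r" "inj_on k (ball w \<rho>)"
    using has_complex_derivative_locally_injective[OF holk _ open_ball dk] r0 by auto
  define B where "B = ball w \<rho>"
  have holkB: "k holomorphic_on B" using holk \<rho> unfolding B_def by (metis holomorphic_on_subset)
  obtain kinv where holkinv: "kinv holomorphic_on (k ` B)" and kinv: "\<And>z. z \<in> B \<Longrightarrow> kinv (k z) = z"
    using holomorphic_has_inverse[OF holkB _ \<rho>(3)[folded B_def]] unfolding B_def by (metis open_ball)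
  have oV: "open (k ` B)"
    using open_mapping_thm3[OF holkB _ \<rho>(3)[folded B_def]] unfolding B_def by auto
  have "0 \<in> k ` B" using kw \<rho>(1) unfolding B_def by (metis centre_in_ball imageI)
  then obtain \<epsilon> where \<epsilon>: "\<epsilon> > 0" "ball 0 \<epsilon> \<subseteq> k ` B"
    using oV open_contains_ball by blast
  have "continuous (at w) k"
    using holk r0 holomorphic_on_imp_continuous_on continuous_on_eq_continuous_at open_ball centre_in_ball
    by blast
  then obtain \<delta>0 where \<delta>0: "\<delta>0 > 0" "\<And>z. dist z w < \<delta>0 \<Longrightarrow> dist (k z) (k w) < \<epsilon>"
    using \<epsilon>(1) unfolding continuous_at_eps_delta by metis
  define \<sigma> where "\<sigma> = min \<delta>0 \<rho>"
  have \<sigma>0: "\<sigma> > 0" using \<delta>0 \<rho> by (simp add: \<sigma>_def)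
  define D where "D = ball w \<sigma>"
  have DB: "D \<subseteq> B" unfolding D_def B_def \<sigma>_def by auto
  define \<omega> where "\<omega> = exp (2 * of_real pi * \<i> / of_nat n)"
  have \<omega>1: "\<omega> \<noteq> 1" unfolding \<omega>_def using root_unity_ne1[OF n2] .
  have n\<omega>: "norm \<omega> = 1" unfolding \<omega>_def norm_exp_eq_Re by simp
  have \<omega>n: "\<omega> ^ n = 1"
  proof -
    have "\<omega> ^ n = exp (of_nat n * (2 * of_real pi * \<i> / of_nat n))"
      unfolding \<omega>_def by (rule exp_of_nat_mult[symmetric])
    also have "\<dots> = exp (2 * of_real pi * \<i>)" using n0 by simp
    finally show ?thesis by simp
  qed
  have inV: "\<omega> * k z \<in> k ` B" if "z \<in> D" for z
  proof -
    have "dist z w < \<delta>0" using that by (auto simp: D_def \<sigma>_def dist_commute)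
    hence "norm (k z) < \<epsilon>" using \<delta>0(2) kw by auto
    hence "\<omega> * k z \<in> ball 0 \<epsilon>" by (simp add: norm_mult n\<omega>)
    thus ?thesis using \<epsilon> by auto
  qed
  define \<phi> where "\<phi> = (\<lambda>z. kinv (\<omega> * k z))"
  have holphi: "\<phi> holomorphic_on D"
  proof -
    have "(\<lambda>z. \<omega> * k z) holomorphic_on D"
      using holkB DB by (intro holomorphic_intros) (auto intro: holomorphic_on_subset)
    hence "kinv \<circ> (\<lambda>z. \<omega> * k z) holomorphic_on D"
      by (rule holomorphic_on_compose_gen[OF _ holkinv]) (use inV in auto)
    thus ?thesis by (simp add: \<phi>_def o_def)
  qed
  have phiprop: "\<phi> z \<in> B \<and> k (\<phi> z) = \<omega> * k z" if zD: "z \<in> D" for z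
  proof -
    obtain x where x: "x \<in> B" "\<omega> * k z = k x" using inV[OF zD] by auto
    thus ?thesis unfolding \<phi>_def using kinv by auto
  qed
  have feq: "f (\<phi> z) = f z" if "z \<in> D" for z
  proof -
    have "\<phi> z \<in> B" "z \<in> B" using that DB phiprop by auto
    hence zr: "z \<in> ball w r" "\<phi> z \<in> ball w r" using \<rho>(2) unfolding B_def by auto
    have "F (\<phi> z) = k (\<phi> z) ^ n" using kn zr by simp
    also have "\<dots> = \<omega> ^ n * k z ^ n" using phiprop that by (simp add: power_mult_distrib)
    also have "\<dots> = F z" using kn zr \<omega>n by simp
    finally show ?thesis unfolding F_def by simp
  qed
  have phiw: "\<phi> w = w"
    using kinv[of w] \<rho>(1) by (simp add: \<phi>_def kw B_def)
  have nid: "\<not> (\<forall>z\<in>D. \<phi> z = z)"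
  proof
    assume all: "\<forall>z\<in>D. \<phi> z = z"
    define z where "z = w + of_real (\<sigma> / 2)"
    have zD: "z \<in> D" using \<sigma>0 by (simp add: z_def D_def dist_norm)
    have "k z = \<omega> * k z" using phiprop[OF zD] all zD by auto
    hence "(1 - \<omega>) * k z = 0" by (simp add: algebra_simps)
    hence "k z = k w" using \<omega>1 kw by simp
    hence "z = w" using \<rho>(3) zD DB B_def \<rho>(1) by (auto dest: inj_onD)
    thus False using \<sigma>0 by (simp add: z_def)
  qed
  have "aut_branch f \<phi> D"
    unfolding aut_branch_def D_def using holphi feq \<sigma>0 by (auto simp: D_def)
  moreover have "w \<in> D" using \<sigma>0 by (simp add: D_def)
  ultimately show ?thesis unfolding Fix_Aut_def using nid phiw by blast
qed




locale prodrep =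
  fixes I :: "nat set" and a :: "nat \<Rightarrow> complex" and p :: nat
  assumes anz: "\<And>n. n \<in> I \<Longrightarrow> a n \<noteq> 0"
    and conv: "conv_exponent_sum I a p"
begin

definition s :: "nat \<Rightarrow> real" where
  "s n = (if n \<in> I then 1 / norm (a n) ^ (p + 1) else 0)"

definition c :: "nat \<Rightarrow> complex \<Rightarrow> complex" where
  "c n z = canonical_factor I a p n z"

definition Q :: "complex \<Rightarrow> complex" where
  "Q z = (\<Prod>n. c n z)"

lemma summable_s: "summable s"
  using conv unfolding conv_exponent_sum_def s_def by simp

lemma s_nonneg: "s n \<ge> 0" by (simp add: s_def)

lemma ev_big:
  assumes R: "R > 0"
  shows "eventually (\<lambda>n. n \<in> I \<longrightarrow> norm (a n) \<ge> 2 * R) sequentially"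
proof -
  have "s \<longlonglongrightarrow> 0" using summable_s by (rule summable_LIMSEQ_zero)
  moreover have "(1 / (2 * R) ^ (p + 1)) > 0" using R by simp
  ultimately have "eventually (\<lambda>n. s n < 1 / (2 * R) ^ (p + 1)) sequentially"
    using order_tendstoD(2) by blast
  thus ?thesis
  proof eventually_elim
    case (elim n)
    show ?case
    proof
      assume nI: "n \<in> I"
      hence an: "norm (a n) > 0" using anz by auto
      from elim nI have "1 / norm (a n) ^ (p + 1) < 1 / (2 * R) ^ (p + 1)" by (simp add: s_def)
      hence "(2 * R) ^ (p + 1) < norm (a n) ^ (p + 1)"
        using an R by (simp add: divide_simps)
      hence "2 * R < norm (a n)"
        by (rule power_less_imp_less_base) simp
      thus "norm (a n) \<ge> 2 * R" by simp
    qed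
  qed
qed

lemma bound:
  assumes R: "R > 0"
  shows "eventually (\<lambda>n. \<forall>z\<in>cball 0 R. norm (c n z - 1) \<le> 3 * R ^ (p + 1) * s n) sequentially"
  using ev_big[OF R]
proof eventually_elim
  case (elim n)
  show ?case
  proof
    fix z :: complex assume z: "z \<in> cball 0 R"
    show "norm (c n z - 1) \<le> 3 * R ^ (p + 1) * s n"
    proof (cases "n \<in> I")
      case False
      thus ?thesis by (simp add: c_def canonical_factor_def s_def)
    next
      case True
      have an: "norm (a n) > 0" using anz True by auto
      have nz: "norm z \<le> R" using z by auto
      have "2 * norm z \<le> norm (a n)" using elim True nz by linarith
      hence "norm z / norm (a n) \<le> 1 / 2" using an by (simp add: divide_simps)
      hence "norm (z / a n) \<le> 1 / 2" by (simp add: norm_divide)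
      hence "norm (weierstrass_factor p (z / a n) - 1) \<le> 3 * norm (z / a n) ^ Suc p"
        by (rule weierstrass_factor_bound)
      also have "\<dots> = 3 * (norm z ^ (p + 1) * (1 / norm (a n) ^ (p + 1)))"
        by (simp add: norm_divide power_divide)
      also have "\<dots> \<le> 3 * (R ^ (p + 1) * (1 / norm (a n) ^ (p + 1)))"
        using nz by (intro mult_left_mono mult_right_mono power_mono) auto
      finally show ?thesis using True by (simp add: c_def canonical_factor_def s_def)
    qed
  qed
qed

lemma c_holo: "c n holomorphic_on A"
  unfolding c_def canonical_factor_def
  using anz by (cases "n \<in> I") (auto intro!: holomorphic_intros)

lemma c_cont: "continuous_on A (c n)"
  using c_holo holomorphic_on_imp_continuous_on by blast

lemma abs_conv: "abs_convergent_prod (\<lambda>n. c n z)"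
  unfolding abs_convergent_prod_conv_summable
proof (rule summable_comparison_test_ev)
  have R: "norm z + 1 > 0" by (simp add: add_nonneg_pos)
  show "eventually (\<lambda>n. norm (norm (c n z - 1)) \<le> 3 * (norm z + 1) ^ (p + 1) * s n) sequentially"
    using bound[OF R] by eventually_elim auto
  show "summable (\<lambda>n. 3 * (norm z + 1) ^ (p + 1) * s n)"
    by (intro summable_mult summable_s)
qed

lemma has_prod_c: "(\<lambda>n. c n z) has_prod Q z"
  using abs_convergent_prod_imp_convergent_prod[OF abs_conv] unfolding Q_def
  by (simp add: convergent_prod_has_prod)

lemma unif:
  assumes R: "R > 0"
  shows "uniform_limit (cball 0 R) (\<lambda>N z. \<Prod>n<N. c n z) Q sequentially"
proof -
  have "uniformly_convergent_on (cball 0 R) (\<lambda>N z. \<Prod>n<N. c n z)"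
  proof (rule uniformly_convergent_on_prod')
    show "uniformly_convergent_on (cball 0 R) (\<lambda>N z. \<Sum>n<N. norm (c n z - 1))"
    proof (rule Weierstrass_m_test'_ev)
      show "\<forall>\<^sub>F n in sequentially. \<forall>z\<in>cball 0 R. norm (norm (c n z - 1)) \<le> 3 * R ^ (p + 1) * s n"
        using bound[OF R] by eventually_elim auto
      show "summable (\<lambda>n. 3 * R ^ (p + 1) * s n)"
        by (intro summable_mult summable_s)
    qed
  qed (auto intro: c_cont compact_cball)
  then obtain g where g: "uniform_limit (cball 0 R) (\<lambda>N z. \<Prod>n<N. c n z) g sequentially"
    by (auto simp: uniformly_convergent_on_def)
  also have "?this \<longleftrightarrow> uniform_limit (cball 0 R) (\<lambda>N z. \<Prod>n<N. c n z) Q sequentially"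
  proof (intro uniform_limit_cong)
    fix z :: complex assume "z \<in> cball 0 R"
    have "(\<lambda>n. \<Prod>k<n. c k z) \<longlonglongrightarrow> g z"
      by (rule tendsto_uniform_limitI[OF g]) fact
    moreover have "(\<lambda>n. \<Prod>k<Suc n. c k z) \<longlonglongrightarrow> Q z"
      using convergent_prod_LIMSEQ[OF abs_convergent_prod_imp_convergent_prod[OF abs_conv, of z]]
      unfolding lessThan_Suc_atMost Q_def .
    hence "(\<lambda>n. \<Prod>k<n. c k z) \<longlonglongrightarrow> Q z"
      by (rule LIMSEQ_imp_Suc)
    ultimately show "g z = Q z"
      using tendsto_unique by force
  qed auto
  finally show ?thesis .
qed

lemma Q_holo: "Q holomorphic_on A"
proof (rule holomorphic_on_subset)
  show "Q holomorphic_on UNIV"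
  proof (rule holomorphic_uniform_sequence[where f = "\<lambda>N z. \<Prod>n<N. c n z"])
    fix z :: complex
    have *: "uniform_limit (cball 0 (norm z + 1)) (\<lambda>N z. \<Prod>n<N. c n z) Q sequentially"
      by (rule unif) (auto intro: add_nonneg_pos)
    hence "uniform_limit (cball z 1) (\<lambda>N z. \<Prod>n<N. c n z) Q sequentially"
      by (rule uniform_limit_on_subset) (simp add: cball_subset_cball_iff)
    thus "\<exists>d>0. cball z d \<subseteq> UNIV \<and> uniform_limit (cball z d) (\<lambda>N z. \<Prod>n<N. c n z) Q sequentially"
      by (intro exI[of _ 1]) auto
  qed (auto intro!: holomorphic_intros c_holo)
qed auto

lemma Q_zero: "Q z = 0 \<longleftrightarrow> (\<exists>k\<in>I. z = a k)"
proof -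
  have "Q z = 0 \<longleftrightarrow> 0 \<in> range (\<lambda>n. c n z)"
    using has_prod_eq_0_iff[OF has_prod_c] .
  also have "\<dots> \<longleftrightarrow> (\<exists>k\<in>I. z = a k)"
  proof
    assume "0 \<in> range (\<lambda>n. c n z)"
    then obtain k where "c k z = 0" by auto
    thus "\<exists>k\<in>I. z = a k" using anz
      by (auto simp: c_def canonical_factor_def split: if_splits)
  next
    assume "\<exists>k\<in>I. z = a k"
    then obtain k where "k \<in> I" "z = a k" by auto
    hence "c k z = 0" using anz by (simp add: c_def canonical_factor_def)
    thus "0 \<in> range (\<lambda>n. c n z)" by (metis rangeI)
  qed
  finally show ?thesis .
qed

lemma logder:
  assumes "Q z \<noteq> 0"
  shows "(\<lambda>k. deriv (c k) z / c k z) sums (deriv Q z / Q z)"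
proof (rule logderiv_prodinf_complex_uniform_limit[where A = "ball 0 (norm z + 1)"])
  show "uniform_limit (ball 0 (norm z + 1)) (\<lambda>n x. \<Prod>k<n. c k x) Q sequentially"
    by (rule uniform_limit_on_subset[OF unif[of "norm z + 1"]]) (auto intro: add_nonneg_pos)
qed (use assms in \<open>auto intro: c_holo\<close>)


definition tt :: "nat \<Rightarrow> complex \<Rightarrow> complex" where
  "tt k z = (if k \<in> I then 1 / (z - a k) + (if p = 1 then 1 / a k else 0) else 0)"

lemma cterm:
  assumes p1: "p \<le> 1" and nz: "k \<in> I \<Longrightarrow> z \<noteq> a k"
  shows "deriv (c k) z / c k z = tt k z"
proof (cases "k \<in> I")
  case False
  hence "c k = (\<lambda>_. 1)" by (auto simp: c_def canonical_factor_def fun_eq_iff)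
  thus ?thesis using False by (simp add: tt_def)
next
  case True
  have ak: "a k \<noteq> 0" using anz True by auto
  have zk: "z \<noteq> a k" using nz True by auto
  have zk': "z - a k \<noteq> 0" "a k - z \<noteq> 0" using zk by auto
  show ?thesis
  proof (cases "p = 0")
    case True
    have wf: "\<And>u. weierstrass_factor p u = 1 - u" using True by (simp add: weierstrass_factor_def)
    have ce: "c k = (\<lambda>z. 1 - z / a k)"
      using \<open>k \<in> I\<close> by (simp add: c_def canonical_factor_def wf fun_eq_iff)
    have "((\<lambda>z. 1 - z / a k) has_field_derivative (- 1 / a k)) (at z)"
      using ak by (auto intro!: derivative_eq_intros)
    hence "deriv (c k) z = - 1 / a k" unfolding ce by (rule DERIV_imp_deriv)
    moreover have pn1: "p \<noteq> 1" using True by simp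
    ultimately show ?thesis using \<open>k \<in> I\<close> ak zk' by (simp add: tt_def ce field_simps)
  next
    case False
    hence p: "p = 1" using p1 by auto
    have wf: "\<And>u. weierstrass_factor p u = (1 - u) * exp u" using p by (simp add: weierstrass_factor_def)
    have ce: "c k = (\<lambda>z. (1 - z / a k) * exp (z / a k))"
      using \<open>k \<in> I\<close> by (simp add: c_def canonical_factor_def wf fun_eq_iff)
    have "((\<lambda>z. (1 - z / a k) * exp (z / a k)) has_field_derivative
            (- 1 / a k) * exp (z / a k) + (1 - z / a k) * (exp (z / a k) * (1 / a k))) (at z)"
      using ak by (auto intro!: derivative_eq_intros)
    hence dk: "deriv (c k) z = (- 1 / a k) * exp (z / a k) + (1 - z / a k) * (exp (z / a k) * (1 / a k))"
      unfolding ce by (rule DERIV_imp_deriv)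
    have tt: "tt k z = 1 / (z - a k) + 1 / a k" unfolding tt_def using \<open>k \<in> I\<close> p by simp
    show ?thesis unfolding tt dk using ak zk' by (simp add: ce field_simps)
  qed
qed

lemma logder_f:
  fixes m :: nat and P :: "complex poly" and f :: "complex \<Rightarrow> complex"
  assumes p1: "p \<le> 1"
    and fdef: "\<And>z. f z = z ^ m * exp (poly P z) * Q z"
    and fz: "f z \<noteq> 0"
  shows "(\<lambda>k. tt k z) sums (deriv f z / f z - of_nat m / z - poly (pderiv P) z)"
proof -
  have fe: "f = (\<lambda>z. z ^ m * exp (poly P z) * Q z)" using fdef by auto
  have Qz: "Q z \<noteq> 0" and zm: "z ^ m \<noteq> 0" using fz fdef by auto
  have dQ: "(Q has_field_derivative deriv Q z) (at z)"
    using Q_holo[of UNIV] by (auto intro!: holomorphic_derivI)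
  have "(f has_field_derivative
          (of_nat m * z ^ (m - 1)) * exp (poly P z) * Q z
          + z ^ m * (exp (poly P z) * poly (pderiv P) z) * Q z
          + z ^ m * exp (poly P z) * deriv Q z) (at z)"
    unfolding fe by (auto intro!: derivative_eq_intros dQ poly_DERIV simp: algebra_simps)
  hence df: "deriv f z = (of_nat m * z ^ (m - 1)) * exp (poly P z) * Q z
          + z ^ m * (exp (poly P z) * poly (pderiv P) z) * Q z
          + z ^ m * exp (poly P z) * deriv Q z"
    by (rule DERIV_imp_deriv)
  have mz: "of_nat m * z ^ (m - 1) / z ^ m = of_nat m / z"
  proof (cases m)
    case (Suc j)
    hence "z \<noteq> 0" using zm by auto
    thus ?thesis using Suc by (simp add: field_simps)
  qed simp
  have "deriv f z / f z = of_nat m * z ^ (m - 1) / z ^ m + poly (pderiv P) z + deriv Q z / Q z"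
    unfolding df fdef using Qz zm by (simp add: field_simps)
  hence eq: "deriv Q z / Q z = deriv f z / f z - of_nat m / z - poly (pderiv P) z"
    using mz by simp
  have nz: "k \<in> I \<Longrightarrow> z \<noteq> a k" for k using Qz Q_zero by auto
  show ?thesis
    using logder[OF Qz] cterm[OF p1 nz] eq by simp
qed

end




lemma Reals_islimpt:
  fixes x :: complex
  assumes x: "x \<in> \<real>"
  shows "x islimpt \<real>"
  unfolding islimpt_approachable
proof (intro allI impI)
  fix e :: real assume e: "e > 0"
  show "\<exists>x'\<in>\<real>. x' \<noteq> x \<and> dist x' x < e"
    by (rule bexI[of _ "x + of_real (e / 2)"]) (use e x in \<open>auto simp: dist_norm\<close>)
qed

lemma deriv_real:
  assumes hol: "f holomorphic_on UNIV" and rr: "\<forall>x\<in>\<real>. f x \<in> \<real>" and x: "x \<in> \<real>"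
  shows "deriv f x \<in> \<real>"
proof -
  have "(f has_field_derivative deriv f x) (at x)"
    using hol by (auto intro: holomorphic_derivI[of f UNIV])
  hence "(f has_field_derivative deriv f x) (at x within \<real>)"
    by (rule has_field_derivative_at_within)
  hence lim: "((\<lambda>y. (f y - f x) / (y - x)) \<longlongrightarrow> deriv f x) (at x within \<real>)"
    by (simp add: has_field_derivative_iff)
  have "at x within \<real> \<noteq> bot"
    using Reals_islimpt[OF x] trivial_limit_within by blast
  moreover have "eventually (\<lambda>y. (f y - f x) / (y - x) \<in> \<real>) (at x within \<real>)"
    unfolding eventually_at_filter
    using rr x by (auto intro!: always_eventually Reals_diff Reals_divide)
  ultimately show ?thesis using Lim_in_closed_set[OF closed_complex_Reals _ _ lim] by blast
qed

lemma exists_real_nonzero: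
  assumes hol: "f holomorphic_on UNIV" and nc: "\<not> (\<exists>c. \<forall>z. f z = c)"
  shows "\<exists>x\<in>\<real>. f x \<noteq> 0"
proof (rule ccontr)
  assume "\<not> ?thesis"
  hence z: "\<And>x. x \<in> \<real> \<Longrightarrow> f x = 0" by auto
  have "f w = 0" for w
    by (rule analytic_continuation[OF hol open_UNIV connected_UNIV subset_UNIV UNIV_I Reals_islimpt[OF Reals_0]])
       (use z in auto)
  with nc show False by auto
qed

lemma recip_diff_pos:
  fixes \<alpha> \<beta> \<gamma> :: real
  assumes "\<alpha> < \<beta>" "\<gamma> < \<alpha> \<or> \<beta> < \<gamma>"
  shows "1 / (\<alpha> - \<gamma>) - 1 / (\<beta> - \<gamma>) > 0"
  using assms(2)
proof
  assume "\<gamma> < \<alpha>"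
  hence "0 < \<alpha> - \<gamma>" "\<alpha> - \<gamma> < \<beta> - \<gamma>" using assms(1) by auto
  hence "1 / (\<beta> - \<gamma>) < 1 / (\<alpha> - \<gamma>)" by (auto intro!: frac_less2)
  thus ?thesis by simp
next
  assume "\<beta> < \<gamma>"
  hence "\<beta> - \<gamma> < 0" "\<alpha> - \<gamma> < \<beta> - \<gamma>" using assms(1) by auto
  hence "1 / (\<beta> - \<gamma>) < 1 / (\<alpha> - \<gamma>)"
    by (simp add: divide_simps)
  thus ?thesis by simp
qed




theorem theorem5:
  fixes f :: "complex \<Rightarrow> complex"
  assumes entire: "f holomorphic_on UNIV"
    and nonconst: "\<not> (\<exists>c. \<forall>z. f z = c)"
    and real_zeros: "\<forall>z. f z = 0 \<longrightarrow> z \<in> \<real>"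
    and genus: "has_genus f 0 \<or> has_genus f 1"
    and real_on_real: "\<forall>x\<in>\<real>. f x \<in> \<real>"
  shows "Fix_Aut f \<subseteq> \<real>
    \<and> (\<forall>u\<in>Fix_Aut f. \<forall>v\<in>Fix_Aut f. Re u < Re v \<longrightarrow>
          (\<exists>t. f t = 0 \<and> Re u \<le> Re t \<and> Re t \<le> Re v))
    \<and> (\<forall>s t. f s = 0 \<and> f t = 0 \<and> Re s < Re t \<longrightarrow>
          (\<exists>w\<in>Fix_Aut f. Re s < Re w \<and> Re w < Re t))"
proof -
  obtain m I a p P where anz: "\<forall>n\<in>I. a n \<noteq> 0" and conv: "conv_exponent_sum I a p"
    and p1: "p \<le> 1" and dP: "degree P \<le> 1"
    and fr: "\<forall>z. f z = z ^ m * exp (poly P z) * (\<Prod>n. canonical_factor I a p n z)"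
  proof -
    from genus obtain g where gg: "has_genus f g" "g \<le> 1" by auto
    then obtain m I a p P where h1: "\<forall>n\<in>I. a n \<noteq> 0" and h2: "\<exists>q. conv_exponent_sum I a q"
      and h3: "p = (LEAST q. conv_exponent_sum I a q)"
      and h4: "\<forall>z. f z = z ^ m * exp (poly P z) * (\<Prod>n. canonical_factor I a p n z)"
      and h5: "g = max p (degree P)"
      unfolding has_genus_def by blast
    have "conv_exponent_sum I a p" using h2 h3 by (metis LeastI_ex)
    moreover have "p \<le> 1" "degree P \<le> 1" using h5 gg by auto
    ultimately show ?thesis using that h1 h4 by blast
  qed
  interpret prodrep I a p using anz conv by unfold_locales auto
  have fdef: "\<And>z. f z = z ^ m * exp (poly P z) * Q z" using fr by (simp add: Q_def c_def)
  define C where "C = coeff (pderiv P) 0"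
  have PC: "\<And>z. poly (pderiv P) z = C"
  proof -
    have "degree (pderiv P) = 0" using dP by (simp add: degree_pderiv)
    hence "pderiv P = [:C:]" unfolding C_def using degree_0_id by metis
    thus "\<And>z. poly (pderiv P) z = C" by simp
  qed
  have zero_iff: "f z = 0 \<longleftrightarrow> (m > 0 \<and> z = 0) \<or> (\<exists>k\<in>I. z = a k)" for z
    using fdef[of z] Q_zero[of z] by auto
  have areal: "a k \<in> \<real>" if "k \<in> I" for k
    using real_zeros zero_iff that by blast
  have Gs: "(\<lambda>k. tt k z) sums (deriv f z / f z - of_nat m / z - C)" if "f z \<noteq> 0" for z
    using logder_f[OF p1 fdef that] PC by simp
  have degen: "deriv f z \<noteq> 0" if m0: "m = 0" and I0: "I = {}" for z
  proof
    assume dz: "deriv f z = 0"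
    have fnz: "f y \<noteq> 0" for y using zero_iff m0 I0 by auto
    have dfy: "deriv f y = C * f y" for y
    proof -
      have tt0: "tt k y = 0" for k unfolding tt_def using I0 by simp
      from Gs[OF fnz[of y]] have "(\<lambda>k. 0) sums (deriv f y / f y - C)" using tt0 m0 by simp
      hence "deriv f y / f y - C = 0" using sums_unique2 sums_zero by blast
      thus ?thesis using fnz[of y] by (simp add: field_simps)
    qed
    have C0: "C = 0" using dfy[of z] dz fnz[of z] by simp
    have "(f has_field_derivative 0) (at y within UNIV)" for y
    proof -
      have "(f has_field_derivative deriv f y) (at y)"
        using entire by (auto intro: holomorphic_derivI[of f UNIV])
      thus ?thesis using dfy[of y] C0 by simp
    qed
    then obtain c where "\<forall>y\<in>UNIV. f y = c"
      using has_field_derivative_zero_constant[of UNIV f] by auto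
    with nonconst show False by auto
  qed
  have crit_real: "z \<in> \<real>" if dz: "deriv f z = 0" for z
  proof (rule ccontr)
    assume zn: "z \<notin> \<real>"
    hence imz: "Im z \<noteq> 0" by (simp add: complex_is_Real_iff)
    have fz: "f z \<noteq> 0" using real_zeros zn by auto
    obtain x where x: "x \<in> \<real>" "f x \<noteq> 0" using exists_real_nonzero[OF entire nonconst] by auto
    have Gx: "deriv f x / f x \<in> \<real>"
      using deriv_real[OF entire real_on_real x(1)] real_on_real x by (auto intro: Reals_divide)
    have "(\<lambda>k. tt k z - tt k x) sums
        ((deriv f z / f z - of_nat m / z - C) - (deriv f x / f x - of_nat m / x - C))"
      using sums_diff[OF Gs[OF fz] Gs[OF x(2)]] .
    hence S1: "(\<lambda>k. Im (tt k z - tt k x)) sums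
        Im ((deriv f z / f z - of_nat m / z - C) - (deriv f x / f x - of_nat m / x - C))"
      by (rule sums_Im)
    define q where "q = (Re z)^2 + (Im z)^2"
    have q0: "q > 0" using imz by (simp add: q_def add_nonneg_pos)
    define s2 where "s2 k = (if k \<in> I then 1 / ((Re z - Re (a k))^2 + (Im z)^2) else 0)" for k
    have imt: "Im (tt k z - tt k x) = - Im z * s2 k" for k
    proof (cases "k \<in> I")
      case True
      have ia: "Im (a k) = 0" using areal[OF True] by (simp add: complex_is_Real_iff)
      have ix: "Im x = 0" using x(1) by (simp add: complex_is_Real_iff)
      have "tt k z - tt k x = 1 / (z - a k) - 1 / (x - a k)"
        using True by (simp add: tt_def)
      thus ?thesis using True ia ix by (simp add: s2_def Im_divide)
    next
      case False
      thus ?thesis by (simp add: tt_def s2_def)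
    qed
    have rhs: "Im ((deriv f z / f z - of_nat m / z - C) - (deriv f x / f x - of_nat m / x - C))
        = of_nat m * Im z / q"
    proof -
      have i1: "Im (deriv f x / f x) = 0" using Gx by (simp add: complex_is_Real_iff)
      have i2: "Im (of_nat m / x) = 0" using x(1) by (simp add: complex_is_Real_iff Im_divide)
      have "Im ((deriv f z / f z - of_nat m / z - C) - (deriv f x / f x - of_nat m / x - C))
          = - Im (of_nat m / z) - Im (deriv f x / f x) + Im (of_nat m / x)" using dz by simp
      also have "\<dots> = - Im (of_nat m / z)" using i1 i2 by simp
      also have "\<dots> = of_nat m * Im z / q" by (simp add: Im_divide q_def)
      finally show ?thesis .
    qed
    have "(\<lambda>k. (- 1 / Im z) * (- Im z * s2 k)) sums ((- 1 / Im z) * (of_nat m * Im z / q))"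
      using S1 unfolding imt rhs by (rule sums_mult)
    hence S2: "s2 sums (- of_nat m / q)" using imz by (simp add: field_simps)
    have s2nn: "s2 k \<ge> 0" for k by (simp add: s2_def)
    have "0 \<le> - of_nat m / q" by (rule sums_le[OF _ sums_zero S2]) (simp add: s2nn)
    hence m0: "m = 0" using q0 by (simp add: divide_simps)
    with S2 have "suminf s2 = 0" "summable s2" by (auto simp: sums_iff)
    hence "\<forall>k. s2 k = 0" using suminf_eq_zero_iff s2nn by blast
    hence I0: "I = {}"
    proof (intro equals0I)
      fix k assume "\<forall>k. s2 k = 0" "k \<in> I"
      moreover have "(Re z - Re (a k))^2 + (Im z)^2 > 0" using imz by (simp add: add_nonneg_pos)
      ultimately show False unfolding s2_def by (metis less_numeral_extra(3) zero_less_divide_1_iff)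
    qed
    show False using degen[OF m0 I0] dz by simp
  qed
  have no_two: False
    if u: "u \<in> \<real>" and v: "v \<in> \<real>" and uv: "Re u < Re v"
      and du: "deriv f u = 0" and dv: "deriv f v = 0"
      and nz: "\<forall>t. f t = 0 \<longrightarrow> \<not> (Re u \<le> Re t \<and> Re t \<le> Re v)" for u v
  proof -
    have fu: "f u \<noteq> 0" and fv: "f v \<noteq> 0" using nz uv by auto
    have "(\<lambda>k. tt k u - tt k v) sums
        ((deriv f u / f u - of_nat m / u - C) - (deriv f v / f v - of_nat m / v - C))"
      using sums_diff[OF Gs[OF fu] Gs[OF fv]] .
    hence S1: "(\<lambda>k. Re (tt k u - tt k v)) sums
        Re ((deriv f u / f u - of_nat m / u - C) - (deriv f v / f v - of_nat m / v - C))"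
      by (rule sums_Re)
    have ue: "u = of_real (Re u)" and ve: "v = of_real (Re v)" using u v by (simp_all add: of_real_Re)
    define r where "r k = (if k \<in> I then 1 / (Re u - Re (a k)) - 1 / (Re v - Re (a k)) else 0)" for k
    have ret: "Re (tt k u - tt k v) = r k" for k
    proof (cases "k \<in> I")
      case True
      have ia: "Im (a k) = 0" using areal[OF True] by (simp add: complex_is_Real_iff)
      have iu: "Im u = 0" "Im v = 0" using u v by (simp_all add: complex_is_Real_iff)
      have e1: "u - a k = of_real (Re u - Re (a k))" by (simp add: complex_eq_iff iu ia)
      have e2: "v - a k = of_real (Re v - Re (a k))" by (simp add: complex_eq_iff iu ia)
      have "tt k u - tt k v = 1 / (u - a k) - 1 / (v - a k)"
        using True by (simp add: tt_def)
      also have "\<dots> = 1 / of_real (Re u - Re (a k)) - 1 / of_real (Re v - Re (a k))"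
        by (simp only: e1 e2)
      finally show ?thesis using True by (simp add: r_def Re_divide_of_real)
    next
      case False
      thus ?thesis by (simp add: tt_def r_def)
    qed
    have rhs: "Re ((deriv f u / f u - of_nat m / u - C) - (deriv f v / f v - of_nat m / v - C))
        = - (of_nat m * (1 / Re u - 1 / Re v))"
    proof -
      have iu: "Im u = 0" "Im v = 0" using u v by (simp_all add: complex_is_Real_iff)
      have r1: "Re (of_nat m / u) = of_nat m / Re u"
        using iu by (cases "Re u = 0") (simp_all add: Re_divide power2_eq_square)
      have r2: "Re (of_nat m / v) = of_nat m / Re v"
        using iu by (cases "Re v = 0") (simp_all add: Re_divide power2_eq_square)
      show ?thesis using du dv r1 r2 by (simp add: algebra_simps)
    qed
    have rpos: "r k > 0" if "k \<in> I" for k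
    proof -
      have "f (a k) = 0" using zero_iff that by auto
      hence "\<not> (Re u \<le> Re (a k) \<and> Re (a k) \<le> Re v)" using nz by auto
      hence "Re (a k) < Re u \<or> Re v < Re (a k)" by auto
      thus ?thesis using recip_diff_pos[OF uv] that by (simp add: r_def)
    qed
    have rnn: "r k \<ge> 0" for k using rpos[of k] by (cases "k \<in> I") (auto simp: r_def)
    have S2: "r sums (- (of_nat m * (1 / Re u - 1 / Re v)))" using S1 unfolding ret rhs .
    have mpos: "of_nat m * (1 / Re u - 1 / Re v) > 0" if "m > 0"
    proof -
      have "f 0 = 0" using zero_iff that by auto
      hence "\<not> (Re u \<le> 0 \<and> 0 \<le> Re v)" using nz by fastforce
      hence "0 < Re u \<or> Re v < 0" by auto
      hence "1 / (Re u - 0) - 1 / (Re v - 0) > 0" using recip_diff_pos[OF uv, of 0] by auto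
      thus ?thesis using that by simp
    qed
    have "0 \<le> - (of_nat m * (1 / Re u - 1 / Re v))"
      by (rule sums_le[OF _ sums_zero S2]) (simp add: rnn)
    hence m0: "m = 0" using mpos by fastforce
    with S2 have "suminf r = 0" "summable r" by (auto simp: sums_iff)
    hence "\<forall>k. r k = 0" using suminf_eq_zero_iff rnn by blast
    hence I0: "I = {}" using rpos by force
    show False using degen[OF m0 I0] du by simp
  qed
  have part1: "Fix_Aut f \<subseteq> \<real>"
    using fix_crit[OF entire] crit_real by blast
  have part2: "\<forall>u\<in>Fix_Aut f. \<forall>v\<in>Fix_Aut f. Re u < Re v \<longrightarrow>
          (\<exists>t. f t = 0 \<and> Re u \<le> Re t \<and> Re t \<le> Re v)"
  proof (intro ballI impI)
    fix u v assume uF: "u \<in> Fix_Aut f" and vF: "v \<in> Fix_Aut f" and uv: "Re u < Re v"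
    show "\<exists>t. f t = 0 \<and> Re u \<le> Re t \<and> Re t \<le> Re v"
    proof (rule ccontr)
      assume "\<not> ?thesis"
      thus False
        using no_two[of u v] part1 uF vF uv fix_crit[OF entire uF] fix_crit[OF entire vF] by blast
    qed
  qed
  have part3: "\<forall>s t. f s = 0 \<and> f t = 0 \<and> Re s < Re t \<longrightarrow>
          (\<exists>w\<in>Fix_Aut f. Re s < Re w \<and> Re w < Re t)"
  proof (intro allI impI)
    fix s t assume st: "f s = 0 \<and> f t = 0 \<and> Re s < Re t"
    have sR: "s \<in> \<real>" and tR: "t \<in> \<real>" using st real_zeros by auto
    define g where "g x = Re (f (of_real x))" for x
    have dg: "(g has_real_derivative Re (deriv f (of_real x))) (at x)" for x
    proof -
      have "(f has_field_derivative deriv f (of_real x)) (at (of_real x))"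
        using entire by (auto intro: holomorphic_derivI[of f UNIV])
      hence "((\<lambda>x. f (of_real x)) has_vector_derivative deriv f (of_real x)) (at x)"
        by (rule has_vector_derivative_real_field)
      thus ?thesis unfolding g_def by (rule has_field_derivative_Re)
    qed
    have cf: "continuous_on UNIV f" using entire holomorphic_on_imp_continuous_on by blast
    have cg: "continuous_on {Re s..Re t} g"
      unfolding g_def by (intro continuous_intros continuous_on_compose2[OF cf]) auto
    have gs: "g (Re s) = g (Re t)"
      using st sR tR by (simp add: g_def of_real_Re)
    obtain \<xi> where \<xi>: "Re s < \<xi>" "\<xi> < Re t" "(g has_real_derivative 0) (at \<xi>)"
      using Rolle[OF _ gs cg] st dg real_differentiable_def by blast
    have "Re (deriv f (of_real \<xi>)) = 0" using DERIV_unique[OF \<xi>(3) dg] by simp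
    moreover have "Im (deriv f (of_real \<xi>)) = 0"
      using deriv_real[OF entire real_on_real, of "of_real \<xi>"] by (simp add: complex_is_Real_iff)
    ultimately have "deriv f (of_real \<xi>) = 0" by (simp add: complex_eq_iff)
    hence "of_real \<xi> \<in> Fix_Aut f" by (rule crit_fix[OF entire nonconst])
    thus "\<exists>w\<in>Fix_Aut f. Re s < Re w \<and> Re w < Re t" using \<xi> by (intro bexI[of _ "of_real \<xi>"]) auto
  qed
  show ?thesis using part1 part2 part3 by blast
qed


end
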